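(* For all integers $n,k,h$ with $2\le k\le n-1$ and $0\le h\le n-k$, $\kappa_s^{(h)}(S_{n,k})=n+h(k-2)-1$.
   Context: For integers $1\le k\le n-1$, let $I_n=\{1,\dots,n\}$ and $P(n,k)$ the set of $k$-permutations $p_1p_2\cdots p_k$ of distinct elements of $I_n$. The $(n,k)$-star graph $S_{n,k}$ has vertex set $P(n,k)$; a vertex $p=p_1p_2\cdots p_k$ is adjacent to (a) each vertex obtained by swapping $p_1$ with $p_i$ for $2\le i\le k$, and (b) each vertex $\alpha p_2\cdots p_k$ with $\alpha\in I_n\setminus\{p_1,\dots,p_k\}$. For a connected graph $G$ and integer $h\ge 0$, a set $S\subseteq V(G)$ is an $h$-cut ($h$-super vertex-cut) if $G-S$ is disconnected and has minimum degree at least $h$; the $h$-super connectivity $\kappa_s^{(h)}(G)$ is the minimum cardinality of an $h$-cut of $G$. *)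

theory Defs
  imports Main
begin

definition induced_adj :: "'a set \<Rightarrow> ('a \<Rightarrow> 'a \<Rightarrow> bool) \<Rightarrow> 'a \<Rightarrow> 'a \<Rightarrow> bool" where
  "induced_adj W adj x y \<longleftrightarrow> x \<in> W \<and> y \<in> W \<and> adj x y"

definition disconnected_on :: "'a set \<Rightarrow> ('a \<Rightarrow> 'a \<Rightarrow> bool) \<Rightarrow> bool" where
  "disconnected_on W adj \<longleftrightarrow> (\<exists>u\<in>W. \<exists>v\<in>W. \<not> (induced_adj W adj)\<^sup>*\<^sup>* u v)"

definition min_degree_ge :: "'a set \<Rightarrow> ('a \<Rightarrow> 'a \<Rightarrow> bool) \<Rightarrow> nat \<Rightarrow> bool" where
  "min_degree_ge W adj h \<longleftrightarrow> (\<forall>v\<in>W. card {u\<in>W. adj v u} \<ge> h)"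

definition h_cut :: "'a set \<Rightarrow> ('a \<Rightarrow> 'a \<Rightarrow> bool) \<Rightarrow> nat \<Rightarrow> 'a set \<Rightarrow> bool" where
  "h_cut V adj h S \<longleftrightarrow> S \<subseteq> V \<and> disconnected_on (V - S) adj \<and> min_degree_ge (V - S) adj h"

definition h_super_connectivity :: "'a set \<Rightarrow> ('a \<Rightarrow> 'a \<Rightarrow> bool) \<Rightarrow> nat \<Rightarrow> nat" where
  "h_super_connectivity V adj h = Inf {card S | S. h_cut V adj h S}"

text \<open>(n,k)-star graph: vertices are k-permutations of {1..n}, as distinct lists (position 0 = p_1).\<close>
definition star_verts :: "nat \<Rightarrow> nat \<Rightarrow> nat list set" where
  "star_verts n k = {p. distinct p \<and> length p = k \<and> set p \<subseteq> {1..n}}"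

definition star_adj :: "nat \<Rightarrow> nat \<Rightarrow> nat list \<Rightarrow> nat list \<Rightarrow> bool" where
  "star_adj n k p q \<longleftrightarrow> p \<in> star_verts n k \<and>
     ((\<exists>i. 1 \<le> i \<and> i < k \<and> q = p[0 := p ! i, i := p ! 0]) \<or>
      (\<exists>a. a \<in> {1..n} - set p \<and> q = a # tl p))"

end

theory Submission
  imports Defs
begin



definition V :: "'a set \<Rightarrow> nat \<Rightarrow> 'a list set" where
  "V A k = {p. distinct p \<and> length p = k \<and> set p \<subseteq> A}"

definition Adj :: "'a set \<Rightarrow> nat \<Rightarrow> 'a list \<Rightarrow> 'a list \<Rightarrow> bool" where
  "Adj A k p q \<longleftrightarrow> p \<in> V A k \<and>
     ((\<exists>i. 1 \<le> i \<and> i < k \<and> q = p[0 := p ! i, i := p ! 0]) \<or>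
      (\<exists>a. a \<in> A - set p \<and> q = a # tl p))"

lemma AdjE:
  assumes "Adj A k p q"
  obtains (swap) i where "p \<in> V A k" "1 \<le> i" "i < k" "q = p[0 := p ! i, i := p ! 0]"
    | (new) a where "p \<in> V A k" "a \<in> A - set p" "q = a # tl p"
  using assms unfolding Adj_def by auto

lemma AdjI1: "p \<in> V A k \<Longrightarrow> 1 \<le> i \<Longrightarrow> i < k \<Longrightarrow> q = p[0 := p ! i, i := p ! 0] \<Longrightarrow> Adj A k p q"
  unfolding Adj_def by auto

lemma AdjI2: "p \<in> V A k \<Longrightarrow> a \<in> A - set p \<Longrightarrow> q = a # tl p \<Longrightarrow> Adj A k p q"
  unfolding Adj_def by auto

lemma V_finite: "finite A \<Longrightarrow> finite (V A k)"
  unfolding V_def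
  by (rule finite_subset[OF _ finite_lists_length_eq[of A k]]) auto

lemma swap_in_V:
  assumes "p \<in> V A k" "i < k"
  shows "p[0 := p ! i, i := p ! 0] \<in> V A k"
proof -
  have d: "distinct p" "length p = k" "set p \<subseteq> A" using assms unfolding V_def by auto
  have "0 < length p" using d assms(2) by simp
  then show ?thesis using d assms(2) unfolding V_def by simp
qed

lemma Adj_V: assumes "Adj A k p q" "1 \<le> k" shows "q \<in> V A k" "p \<in> V A k"
proof -
  show "p \<in> V A k" using assms unfolding Adj_def by auto
  have d: "distinct p" "length p = k" "set p \<subseteq> A" using assms unfolding Adj_def V_def by auto
  from assms(1) show "q \<in> V A k"
  proof (cases rule: AdjE)
    case (swap i) then show ?thesis using swap_in_V[OF \<open>p \<in> V A k\<close>] by simp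
  next
    case (new a)
    have "p \<noteq> []" using d assms(2) by auto
    then obtain x xs where p: "p = x # xs" by (cases p) auto
    show ?thesis using d new p unfolding V_def by auto
  qed
qed

lemma Adj_sym: assumes "Adj A k p q" "1 \<le> k" shows "Adj A k q p"
proof -
  have qV: "q \<in> V A k" using Adj_V[OF assms] by simp
  have d: "distinct p" "length p = k" "set p \<subseteq> A" using assms unfolding Adj_def V_def by auto
  from assms(1) show ?thesis
  proof (cases rule: AdjE)
    case (swap i)
    have "p = q[0 := q ! i, i := q ! 0]"
      using swap d by (auto simp: nth_list_update list_eq_iff_nth_eq)
    then show ?thesis using swap qV by (intro AdjI1) auto
  next
    case (new a)
    have "p \<noteq> []" using d assms(2) by auto
    then obtain x xs where p: "p = x # xs" by (cases p) auto
    have "x \<in> A - set q" "p = x # tl q" using new p d by auto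
    then show ?thesis using qV by (intro AdjI2) auto
  qed
qed

lemma Adj_irrefl: "\<not> Adj A k p p"
proof
  assume a: "Adj A k p p"
  have d: "distinct p" "length p = k" using a unfolding Adj_def V_def by auto
  from a show False
  proof (cases rule: AdjE)
    case (swap i)
    then have "p ! 0 = p ! i"
      by (metis d(2) length_list_update nth_list_update_eq nth_list_update_neq
        not_one_le_zero order_less_le_trans zero_less_one)
    then show False using swap d nth_eq_iff_index_eq by fastforce
  next
    case (new b) then show False by (metis DiffD2 list.set_intros(1))
  qed
qed

definition crossv :: "'a list \<Rightarrow> 'a list" where
  "crossv p = (last p # tl (butlast p)) @ [hd p]"

lemma crossv_app: "xs \<noteq> [] \<Longrightarrow> crossv (xs @ [c]) = (c # tl xs) @ [hd xs]"
  unfolding crossv_def by simp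

lemma crossv_crossv: "2 \<le> length p \<Longrightarrow> crossv (crossv p) = p"
proof -
  assume l: "2 \<le> length p"
  then obtain x ys where p: "p = x # ys" by (cases p) auto
  then have "ys \<noteq> []" using l by auto
  then obtain zs c where "ys = zs @ [c]" by (metis rev_exhaust)
  then show ?thesis using p unfolding crossv_def by simp
qed

lemma V_app: "xs @ [c] \<in> V A (Suc k) \<longleftrightarrow> xs \<in> V (A - {c}) k \<and> c \<in> A"
  unfolding V_def by auto

lemma V_split: assumes "p \<in> V A (Suc k)"
  shows "p = butlast p @ [last p]" "butlast p \<in> V (A - {last p}) k" "last p \<in> A"
proof -
  have "p \<noteq> []" using assms unfolding V_def by auto
  then show 1: "p = butlast p @ [last p]" by simp
  from assms show "butlast p \<in> V (A - {last p}) k" "last p \<in> A"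
    using V_app[of "butlast p" "last p" A k] 1 by auto
qed

lemma swap_app_lt:
  assumes "i < length xs"
  shows "(xs @ [c])[0 := (xs @ [c]) ! i, i := (xs @ [c]) ! 0] = xs[0 := xs ! i, i := xs ! 0] @ [c]"
  using assms by (cases xs; cases i) (auto simp add: list_update_append nth_append)

lemma swap_app_eq:
  assumes "xs \<noteq> []"
  shows "(xs @ [c])[0 := (xs @ [c]) ! length xs, length xs := (xs @ [c]) ! 0] = (c # tl xs) @ [hd xs]"
  using assms by (cases xs) auto

lemma Adj_app_iff:
  assumes "1 \<le> k" "xs \<in> V (A - {c}) k" "c \<in> A"
  shows "Adj A (Suc k) (xs @ [c]) (ys @ [c]) \<longleftrightarrow> Adj (A - {c}) k xs ys"
proof -
  have d: "distinct xs" "length xs = k" "set xs \<subseteq> A - {c}" using assms unfolding V_def by auto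
  have ne: "xs \<noteq> []" using d assms(1) by auto
  have bigV: "xs @ [c] \<in> V A (Suc k)" using assms(2,3) by (simp add: V_app)
  show ?thesis
  proof
    assume a: "Adj A (Suc k) (xs @ [c]) (ys @ [c])"
    from a show "Adj (A - {c}) k xs ys"
    proof (cases rule: AdjE)
      case (swap i)
      show ?thesis
      proof (cases "i < k")
        case True
        then have "ys = xs[0 := xs ! i, i := xs ! 0]" using swap swap_app_lt[of i xs c] d by simp
        then show ?thesis using swap True assms(2) by (intro AdjI1) auto
      next
        case False
        then have "i = length xs" using swap d by simp
        then have "ys @ [c] = (c # tl xs) @ [hd xs]" using swap swap_app_eq[OF ne] by simp
        then have "hd xs = c" by simp
        then show ?thesis using d ne by (metis DiffD2 hd_in_set insertI1 subsetD)
      qed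
    next
      case (new b)
      then have "ys = b # tl xs" using ne by simp
      then show ?thesis using new assms(2) by (intro AdjI2) auto
    qed
  next
    assume a: "Adj (A - {c}) k xs ys"
    from a show "Adj A (Suc k) (xs @ [c]) (ys @ [c])"
    proof (cases rule: AdjE)
      case (swap i)
      then have "ys @ [c] = (xs @ [c])[0 := (xs @ [c]) ! i, i := (xs @ [c]) ! 0]"
        using swap_app_lt[of i xs c] d by simp
      then show ?thesis using swap bigV by (intro AdjI1) auto
    next
      case (new b)
      then have "ys @ [c] = b # tl (xs @ [c])" "b \<in> A - set (xs @ [c])" using ne by auto
      then show ?thesis using bigV by (intro AdjI2) auto
    qed
  qed
qed

lemma Adj_app_cases:
  assumes "1 \<le> k" "xs \<in> V (A - {c}) k" "c \<in> A" "Adj A (Suc k) (xs @ [c]) q"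
  shows "(\<exists>ys. q = ys @ [c] \<and> Adj (A - {c}) k xs ys) \<or> q = crossv (xs @ [c])"
proof -
  have d: "distinct xs" "length xs = k" "set xs \<subseteq> A - {c}" using assms unfolding V_def by auto
  have ne: "xs \<noteq> []" using d assms(1) by auto
  from assms(4) show ?thesis
  proof (cases rule: AdjE)
    case (swap i)
    show ?thesis
    proof (cases "i < k")
      case True
      then have "q = xs[0 := xs ! i, i := xs ! 0] @ [c]" using swap swap_app_lt[of i xs c] d by simp
      moreover have "Adj (A - {c}) k xs (xs[0 := xs ! i, i := xs ! 0])"
        using swap True assms(2) by (intro AdjI1) auto
      ultimately show ?thesis by blast
    next
      case False
      then have "i = length xs" using swap d by simp
      then show ?thesis using swap swap_app_eq[OF ne] crossv_app[OF ne] by simp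
    qed
  next
    case (new b)
    then have "q = (b # tl xs) @ [c]" using ne by simp
    moreover have "Adj (A - {c}) k xs (b # tl xs)" using new assms(2) by (intro AdjI2) auto
    ultimately show ?thesis by blast
  qed
qed

lemma Adj_crossv:
  assumes "1 \<le> k" "xs \<in> V (A - {c}) k" "c \<in> A"
  shows "Adj A (Suc k) (xs @ [c]) (crossv (xs @ [c]))" "last (crossv (xs @ [c])) \<noteq> c"
    "last (crossv (xs @ [c])) \<in> A"
proof -
  have d: "distinct xs" "length xs = k" "set xs \<subseteq> A - {c}" using assms unfolding V_def by auto
  have ne: "xs \<noteq> []" using d assms(1) by auto
  have bigV: "xs @ [c] \<in> V A (Suc k)" using assms(2,3) by (simp add: V_app)
  have "crossv (xs @ [c]) = (xs @ [c])[0 := (xs @ [c]) ! length xs, length xs := (xs @ [c]) ! 0]"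
    using swap_app_eq[OF ne] crossv_app[OF ne] by simp
  then show "Adj A (Suc k) (xs @ [c]) (crossv (xs @ [c]))"
    using bigV d assms(1) by (intro AdjI1[of _ _ _ "length xs"]) auto
  have "hd xs \<in> A - {c}" using d(3) hd_in_set[OF ne] by blast
  then show "last (crossv (xs @ [c])) \<noteq> c" "last (crossv (xs @ [c])) \<in> A"
    using crossv_app[OF ne] by auto
qed

lemma inj_crossv: "inj_on crossv {p. 2 \<le> length p}"
  by (rule inj_on_inverseI[where g = crossv]) (auto simp: crossv_crossv)




definition NC :: "'a set \<Rightarrow> nat \<Rightarrow> 'a list set \<Rightarrow> 'a list set" where
  "NC A k D = D \<union> {q. \<exists>p\<in>D. Adj A k p q}"

definition Dc :: "'a \<Rightarrow> 'a list set \<Rightarrow> 'a list set" where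
  "Dc c D = {xs. xs @ [c] \<in> D}"

lemma NC_sub: "1 \<le> k \<Longrightarrow> D \<subseteq> V A k \<Longrightarrow> NC A k D \<subseteq> V A k"
  unfolding NC_def using Adj_V by blast

lemma NC_finite: "finite A \<Longrightarrow> 1 \<le> k \<Longrightarrow> D \<subseteq> V A k \<Longrightarrow> finite (NC A k D)"
  by (rule finite_subset[OF NC_sub V_finite])

lemma Dc_V: "D \<subseteq> V A (Suc k) \<Longrightarrow> Dc c D \<subseteq> V (A - {c}) k"
proof
  fix xs assume "D \<subseteq> V A (Suc k)" "xs \<in> Dc c D"
  then have "xs @ [c] \<in> V A (Suc k)" unfolding Dc_def by auto
  then show "xs \<in> V (A - {c}) k" by (simp add: V_app)
qed

lemma copy_N:
  assumes "1 \<le> k" "c \<in> A" "D \<subseteq> V A (Suc k)"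
  shows "(\<lambda>ys. ys @ [c]) ` NC (A - {c}) k (Dc c D) \<subseteq> NC A (Suc k) D"
proof
  fix z assume "z \<in> (\<lambda>ys. ys @ [c]) ` NC (A - {c}) k (Dc c D)"
  then obtain ys where z: "z = ys @ [c]" and ys: "ys \<in> NC (A - {c}) k (Dc c D)" by blast
  show "z \<in> NC A (Suc k) D"
  proof (cases "ys \<in> Dc c D")
    case True then show ?thesis using z unfolding NC_def Dc_def by simp
  next
    case False
    then obtain xs where xs: "xs \<in> Dc c D" "Adj (A - {c}) k xs ys" using ys unfolding NC_def by blast
    have xsV: "xs \<in> V (A - {c}) k" using xs(1) Dc_V[OF assms(3)] by blast
    have "Adj A (Suc k) (xs @ [c]) (ys @ [c])" using Adj_app_iff[OF assms(1) xsV assms(2)] xs(2) by simp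
    then show ?thesis using z xs(1) unfolding NC_def Dc_def by blast
  qed
qed

lemma card_ge_Suc_deg:
  assumes "finite D" "p \<in> D" "h \<le> card {u\<in>D. Adj A k p u}"
  shows "Suc h \<le> card D"
proof -
  have "{u\<in>D. Adj A k p u} \<subseteq> D - {p}" using Adj_irrefl by fastforce
  then have "card {u\<in>D. Adj A k p u} \<le> card (D - {p})" using assms(1) by (intro card_mono) auto
  also have "\<dots> = card D - 1" using assms(1,2) by simp
  moreover have "card D > 0" using assms(1,2) card_gt_0_iff by blast
  ultimately show ?thesis using assms(3) by linarith
qed

lemma deg_copy_le:
  assumes "1 \<le> k" "c \<in> A" "D \<subseteq> V A (Suc k)" "xs \<in> Dc c D" "finite A"
  shows "card {u\<in>D. Adj A (Suc k) (xs @ [c]) u} \<le> Suc (card {ys\<in>Dc c D. Adj (A - {c}) k xs ys})"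
proof -
  have xsV: "xs \<in> V (A - {c}) k" using assms(4) Dc_V[OF assms(3)] by blast
  let ?S = "{ys\<in>Dc c D. Adj (A - {c}) k xs ys}"
  have fS: "finite ?S"
  proof -
    have "?S \<subseteq> V (A - {c}) k" using Dc_V[OF assms(3)] by blast
    then show ?thesis using V_finite[of "A - {c}" k] assms(5) finite_subset by blast
  qed
  have "{u\<in>D. Adj A (Suc k) (xs @ [c]) u} \<subseteq> insert (crossv (xs @ [c])) ((\<lambda>ys. ys @ [c]) ` ?S)"
  proof
    fix u assume u: "u \<in> {u\<in>D. Adj A (Suc k) (xs @ [c]) u}"
    then have "(\<exists>ys. u = ys @ [c] \<and> Adj (A - {c}) k xs ys) \<or> u = crossv (xs @ [c])"
      using Adj_app_cases[OF assms(1) xsV assms(2)] by blast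
    then show "u \<in> insert (crossv (xs @ [c])) ((\<lambda>ys. ys @ [c]) ` ?S)"
      using u unfolding Dc_def by auto
  qed
  then have "card {u\<in>D. Adj A (Suc k) (xs @ [c]) u} \<le> card (insert (crossv (xs @ [c])) ((\<lambda>ys. ys @ [c]) ` ?S))"
    using fS by (intro card_mono) auto
  also have "\<dots> \<le> Suc (card ((\<lambda>ys. ys @ [c]) ` ?S))" using fS by (simp add: card_insert_if)
  also have "\<dots> \<le> Suc (card ?S)" using card_image_le[OF fS] by simp
  finally show ?thesis .
qed




lemma finite_Vsub: "finite A \<Longrightarrow> X \<subseteq> V A k \<Longrightarrow> finite X"
  using V_finite finite_subset by blast

lemma arith_W: assumes a: "1 \<le> k" "h \<le> n - Suc k" "Suc k \<le> n" shows
   "n + h * k \<le> (n - 1 + (h - 1) * (k - 1)) + (n - 1 + (h - 1) * (k - 1))"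
proof (cases h)
  case 0 then show ?thesis using a by simp
next
  case (Suc h')
  obtain k' where k: "k = Suc k'" using a by (cases k) auto
  have "n \<ge> h' + k' + 3" using a Suc k by simp
  define m where "m = n - (h' + k' + 3)"
  have m: "n = m + h' + k' + 3" using \<open>n \<ge> h' + k' + 3\<close> unfolding m_def by simp
  show ?thesis unfolding m Suc k by (simp add: algebra_simps)
qed

lemma W_lemma:
  assumes "finite A" "1 \<le> k" "k \<le> card A" "h \<le> card A - k" "D \<subseteq> V A k" "D \<noteq> {}"
    "\<forall>v\<in>D. h \<le> card {u\<in>D. Adj A k v u}"
  shows "card A + h * (k - 1) \<le> card (NC A k D)"
  using assms
proof (induction k arbitrary: A h D)
  case 0 then show ?case by simp
next
  case (Suc k)
  note prems = Suc.prems
  have fD: "finite D" using prems(1,5) by (meson V_finite finite_subset)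
  have fN: "finite (NC A (Suc k) D)" using NC_finite[OF prems(1) prems(2) prems(5)] .
  show ?case
  proof (cases "k = 0")
    case True
    obtain p where p: "p \<in> D" using prems(6) by blast
    then have "p \<in> V A 1" using prems(5) True by auto
    then obtain a where a: "p = [a]" "a \<in> A" unfolding V_def by (auto simp: length_Suc_conv)
    have "(\<lambda>b. [b]) ` A \<subseteq> NC A (Suc k) D"
    proof
      fix z assume "z \<in> (\<lambda>b. [b]) ` A"
      then obtain b where b: "z = [b]" "b \<in> A" by blast
      show "z \<in> NC A (Suc k) D"
      proof (cases "b = a")
        case True then show ?thesis using b a p unfolding NC_def by simp
      next
        case False
        have "Adj A (Suc k) p z" using b a False \<open>p \<in> V A 1\<close> True by (intro AdjI2[of _ _ _ b]) auto
        then show ?thesis using p unfolding NC_def by blast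
      qed
    qed
    then have "card ((\<lambda>b. [b]) ` A) \<le> card (NC A (Suc k) D)" using fN by (intro card_mono)
    moreover have "card ((\<lambda>b. [b]) ` A) = card A" by (intro card_image) (auto simp: inj_on_def)
    ultimately show ?thesis using True by simp
  next
    case False
    then have k1: "1 \<le> k" by simp
    let ?n = "card A"
    have lastA: "\<And>p. p \<in> D \<Longrightarrow> p = butlast p @ [last p] \<and> last p \<in> A"
      using prems(5) V_split by blast
    have imgsub: "\<And>c. c \<in> A \<Longrightarrow> (\<lambda>ys. ys @ [c]) ` NC (A - {c}) k (Dc c D) \<subseteq> NC A (Suc k) D"
      using copy_N[OF k1 _ prems(5)] by blast
    have inj_app: "\<And>c X. inj_on (\<lambda>ys. ys @ [c]) X" by (auto simp: inj_on_def)
    have fNs: "\<And>c. finite (NC (A - {c}) k (Dc c D))"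
      using NC_finite[OF _ k1] Dc_V[OF prems(5)] prems(1) by blast
    have cardAc: "\<And>c. c \<in> A \<Longrightarrow> card (A - {c}) = ?n - 1" using prems(1) by simp
    show ?thesis
    proof (cases "\<exists>c. \<forall>p\<in>D. last p = c")
      case True
      then obtain c where c: "\<forall>p\<in>D. last p = c" by blast
      obtain p0 where p0: "p0 \<in> D" using prems(6) by blast
      have cA: "c \<in> A" using lastA[OF p0] c p0 by auto
      have Deq: "p = butlast p @ [c] \<and> butlast p \<in> Dc c D" if p: "p \<in> D" for p
      proof -
        have e: "p = butlast p @ [c]" using lastA[OF p] c p by metis
        then have "butlast p @ [c] \<in> D" using p by simp
        then show ?thesis using e unfolding Dc_def by blast
      qed
      have Dcne: "Dc c D \<noteq> {}" using Deq[OF p0] by blast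
      have mindeg: "\<forall>xs\<in>Dc c D. h \<le> card {ys\<in>Dc c D. Adj (A - {c}) k xs ys}"
      proof
        fix xs assume xs: "xs \<in> Dc c D"
        have xsV: "xs \<in> V (A - {c}) k" using xs Dc_V[OF prems(5)] by blast
        let ?S = "{ys\<in>Dc c D. Adj (A - {c}) k xs ys}"
        have "?S \<subseteq> V (A - {c}) k" using Dc_V[OF prems(5)] by blast
        then have fS: "finite ?S" using prems(1) by (intro finite_Vsub[of "A - {c}"]) auto
        have "{u\<in>D. Adj A (Suc k) (xs @ [c]) u} \<subseteq> (\<lambda>ys. ys @ [c]) ` ?S"
        proof
          fix u assume u: "u \<in> {u\<in>D. Adj A (Suc k) (xs @ [c]) u}"
          then have u1: "u = butlast u @ [c]" "butlast u \<in> Dc c D" using Deq by blast+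
          then have "Adj (A - {c}) k xs (butlast u)"
            using u Adj_app_iff[OF k1 xsV cA, of "butlast u"] by simp
          then show "u \<in> (\<lambda>ys. ys @ [c]) ` ?S" using u1 by blast
        qed
        then have "card {u\<in>D. Adj A (Suc k) (xs @ [c]) u} \<le> card ((\<lambda>ys. ys @ [c]) ` ?S)"
          using fS by (intro card_mono) (auto simp del: )
        also have "\<dots> \<le> card ?S" using card_image_le[OF fS] .
        moreover have "xs @ [c] \<in> D" using xs unfolding Dc_def by simp
        ultimately show "h \<le> card ?S" using prems(7) by fastforce
      qed
      have IH: "card (A - {c}) + h * (k - 1) \<le> card (NC (A - {c}) k (Dc c D))"
      proof (rule Suc.IH[OF _ k1 _ _ Dc_V[OF prems(5)] Dcne mindeg])
        show "finite (A - {c})" using prems(1) by simp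
        show "k \<le> card (A - {c})" using prems(3) cardAc[OF cA] by simp
        show "h \<le> card (A - {c}) - k" using prems(4) cardAc[OF cA] by simp
      qed
      have crAdj: "Adj A (Suc k) p (crossv p) \<and> last (crossv p) \<noteq> c" if p: "p \<in> D" for p
      proof -
        have p1: "p = butlast p @ [c]" "butlast p \<in> Dc c D" using Deq[OF p] by auto
        have xsV: "butlast p \<in> V (A - {c}) k" using p1(2) Dc_V[OF prems(5)] by blast
        show ?thesis using Adj_crossv(1,2)[OF k1 xsV cA] p1(1) by metis
      qed
      have cross_sub: "crossv ` D \<subseteq> NC A (Suc k) D"
      proof
        fix z assume "z \<in> crossv ` D"
        then obtain p where p: "p \<in> D" "z = crossv p" by blast
        then have "Adj A (Suc k) p z" using crAdj by blast
        then show "z \<in> NC A (Suc k) D" using p(1) unfolding NC_def by blast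
      qed
      have disj: "(\<lambda>ys. ys @ [c]) ` NC (A - {c}) k (Dc c D) \<inter> crossv ` D = {}"
      proof (rule ccontr)
        assume "(\<lambda>ys. ys @ [c]) ` NC (A - {c}) k (Dc c D) \<inter> crossv ` D \<noteq> {}"
        then obtain ys p where "p \<in> D" "ys @ [c] = crossv p" by blast
        then have "last (crossv p) = c" "last (crossv p) \<noteq> c" using crAdj by (metis last_snoc)+
        then show False by simp
      qed
      have cc: "card (crossv ` D) = card D"
      proof (rule card_image, rule inj_on_subset[OF inj_crossv])
        show "D \<subseteq> {p. 2 \<le> length p}"
        proof
          fix p assume "p \<in> D"
          then have "length p = Suc k" using prems(5) unfolding V_def by blast
          then show "p \<in> {p. 2 \<le> length p}" using k1 by simp
        qed
      qed
      have "Suc h \<le> card D" using card_ge_Suc_deg[OF fD p0] prems(7) p0 by blast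
      have "card ((\<lambda>ys. ys @ [c]) ` NC (A - {c}) k (Dc c D) \<union> crossv ` D) \<le> card (NC A (Suc k) D)"
        by (rule card_mono[OF fN Un_least[OF imgsub[OF cA] cross_sub]])
      moreover have "card ((\<lambda>ys. ys @ [c]) ` NC (A - {c}) k (Dc c D) \<union> crossv ` D)
          = card ((\<lambda>ys. ys @ [c]) ` NC (A - {c}) k (Dc c D)) + card (crossv ` D)"
        by (rule card_Un_disjoint[OF finite_imageI[OF fNs] finite_imageI[OF fD] disj])
      moreover have "card ((\<lambda>ys. ys @ [c]) ` NC (A - {c}) k (Dc c D)) = card (NC (A - {c}) k (Dc c D))"
        by (rule card_image[OF inj_app])
      moreover have "h * (k - 1) + h = h * k" using k1 by (cases k) auto
      moreover have "?n \<ge> 1" using prems(3) by simp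
      ultimately show ?thesis using IH cardAc[OF cA] \<open>Suc h \<le> card D\<close> cc
        by simp
    next
      case False
      obtain p1 where "p1 \<in> D" using prems(6) by blast
      have "\<forall>c. \<exists>p\<in>D. last p \<noteq> c" using False by simp
      then obtain p2 where "p2 \<in> D" "last p2 \<noteq> last p1" by blast
      then have p12: "p1 \<in> D" "p2 \<in> D" "last p1 \<noteq> last p2" using \<open>p1 \<in> D\<close> by auto
      define c1 where "c1 = last p1"
      define c2 where "c2 = last p2"
      have cA: "c1 \<in> A" "c2 \<in> A" "c1 \<noteq> c2" using lastA[OF p12(1)] lastA[OF p12(2)] p12(3) c1_def c2_def by blast+
      have bound: "?n - 1 + (h - 1) * (k - 1) \<le> card (NC (A - {c}) k (Dc c D))"
        if cc: "c \<in> A" "Dc c D \<noteq> {}" for c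
      proof -
        have mindeg: "\<forall>xs\<in>Dc c D. h - 1 \<le> card {ys\<in>Dc c D. Adj (A - {c}) k xs ys}"
        proof
          fix xs assume xs: "xs \<in> Dc c D"
          have "xs @ [c] \<in> D" using xs unfolding Dc_def by simp
          then have "h \<le> card {u\<in>D. Adj A (Suc k) (xs @ [c]) u}" using prems(7) by blast
          then show "h - 1 \<le> card {ys\<in>Dc c D. Adj (A - {c}) k xs ys}"
            using deg_copy_le[OF k1 cc(1) prems(5) xs prems(1)] by linarith
        qed
        have "card (A - {c}) + (h - 1) * (k - 1) \<le> card (NC (A - {c}) k (Dc c D))"
        proof (rule Suc.IH[OF _ k1 _ _ Dc_V[OF prems(5)] cc(2) mindeg])
          show "finite (A - {c})" using prems(1) by simp
          show "k \<le> card (A - {c})" using prems(3) cardAc[OF cc(1)] by simp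
          show "h - 1 \<le> card (A - {c}) - k" using prems(4) cardAc[OF cc(1)] by simp
        qed
        then show ?thesis using cardAc[OF cc(1)] by simp
      qed
      have "butlast p1 @ [c1] \<in> D" using lastA[OF p12(1)] p12(1) c1_def by metis
      then have ne1: "Dc c1 D \<noteq> {}" unfolding Dc_def by blast
      have "butlast p2 @ [c2] \<in> D" using lastA[OF p12(2)] p12(2) c2_def by metis
      then have ne2: "Dc c2 D \<noteq> {}" unfolding Dc_def by blast
      have disj: "(\<lambda>ys. ys @ [c1]) ` NC (A - {c1}) k (Dc c1 D) \<inter> (\<lambda>ys. ys @ [c2]) ` NC (A - {c2}) k (Dc c2 D) = {}"
        using cA(3) by auto
      have "card ((\<lambda>ys. ys @ [c1]) ` NC (A - {c1}) k (Dc c1 D) \<union> (\<lambda>ys. ys @ [c2]) ` NC (A - {c2}) k (Dc c2 D))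
          \<le> card (NC A (Suc k) D)"
        by (rule card_mono[OF fN Un_least[OF imgsub[OF cA(1)] imgsub[OF cA(2)]]])
      moreover have "card ((\<lambda>ys. ys @ [c1]) ` NC (A - {c1}) k (Dc c1 D) \<union> (\<lambda>ys. ys @ [c2]) ` NC (A - {c2}) k (Dc c2 D))
          = card ((\<lambda>ys. ys @ [c1]) ` NC (A - {c1}) k (Dc c1 D)) + card ((\<lambda>ys. ys @ [c2]) ` NC (A - {c2}) k (Dc c2 D))"
        by (rule card_Un_disjoint[OF finite_imageI[OF fNs] finite_imageI[OF fNs] disj])
      moreover have "card ((\<lambda>ys. ys @ [c1]) ` NC (A - {c1}) k (Dc c1 D)) = card (NC (A - {c1}) k (Dc c1 D))"
        by (rule card_image[OF inj_app])
      moreover have "card ((\<lambda>ys. ys @ [c2]) ` NC (A - {c2}) k (Dc c2 D)) = card (NC (A - {c2}) k (Dc c2 D))"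
        by (rule card_image[OF inj_app])
      ultimately have "(?n - 1 + (h - 1) * (k - 1)) + (?n - 1 + (h - 1) * (k - 1)) \<le> card (NC A (Suc k) D)"
        using add_mono[OF bound[OF cA(1) ne1] bound[OF cA(2) ne2]] by linarith
      moreover have "?n + h * k \<le> (?n - 1 + (h - 1) * (k - 1)) + (?n - 1 + (h - 1) * (k - 1))"
        using arith_W[OF k1, of h ?n] prems(3,4) by simp
      ultimately show ?thesis by simp
    qed
  qed
qed




abbreviation RR :: "'a list set \<Rightarrow> 'a set \<Rightarrow> nat \<Rightarrow> 'a list \<Rightarrow> 'a list \<Rightarrow> bool" where
  "RR W A k \<equiv> (induced_adj W (Adj A k))\<^sup>*\<^sup>*"

lemma R_mem: "(induced_adj W adj)\<^sup>*\<^sup>* x y \<Longrightarrow> x \<in> W \<Longrightarrow> y \<in> W"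
  by (induction rule: rtranclp_induct) (auto simp: induced_adj_def)

lemma R_sym: assumes "1 \<le> k" "RR W A k x y" shows "RR W A k y x"
  using assms(2)
proof (induction rule: rtranclp_induct)
  case base then show ?case by simp
next
  case (step y z)
  then have "induced_adj W (Adj A k) z y" using Adj_sym[OF _ assms(1)] unfolding induced_adj_def by blast
  then show ?case using step(3) by (rule converse_rtranclp_into_rtranclp)
qed

lemma R_step: "RR W A k x y \<Longrightarrow> y \<in> W \<Longrightarrow> z \<in> W \<Longrightarrow> Adj A k y z \<Longrightarrow> RR W A k x z"
  by (erule rtranclp.rtrancl_into_rtrancl) (simp add: induced_adj_def)

lemma R_trans: "RR W A k x y \<Longrightarrow> RR W A k y z \<Longrightarrow> RR W A k x z"
  by (rule rtranclp_trans)

lemma conn1: assumes "X \<subseteq> V A 1" "x \<in> X" "y \<in> X" shows "RR X A 1 x y"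
proof (cases "x = y")
  case True then show ?thesis by simp
next
  case False
  obtain a where a: "x = [a]" using assms(1,2) unfolding V_def by (auto simp: length_Suc_conv)
  obtain b where b: "y = [b]" "b \<in> A" using assms(1,3) unfolding V_def by (auto simp: length_Suc_conv)
  have "x \<in> V A 1" using assms by auto
  then have "Adj A 1 x y" using a b False by (intro AdjI2[of _ _ _ b]) auto
  then have "induced_adj X (Adj A 1) x y" using assms unfolding induced_adj_def by simp
  then show ?thesis by simp
qed

lemma lift:
  assumes "1 \<le> k" "c \<in> A" "W \<subseteq> V A (Suc k)"
    "RR (Dc c W) (A - {c}) k x y"
  shows "RR W A (Suc k) (x @ [c]) (y @ [c])"
  using assms(4)
proof (induction rule: rtranclp_induct)
  case base then show ?case by simp
next
  case (step y z)
  have yz: "y \<in> Dc c W" "z \<in> Dc c W" "Adj (A - {c}) k y z" using step(2) unfolding induced_adj_def by auto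
  have yV: "y \<in> V (A - {c}) k" using yz(1) Dc_V[OF assms(3)] by blast
  have "Adj A (Suc k) (y @ [c]) (z @ [c])" using Adj_app_iff[OF assms(1) yV assms(2)] yz(3) by simp
  moreover have "y @ [c] \<in> W" "z @ [c] \<in> W" using yz unfolding Dc_def by auto
  ultimately show ?case using step(3) R_step by metis
qed

lemma Dc_diff: "c \<in> A \<Longrightarrow> V (A - {c}) k - Dc c F = Dc c (V A (Suc k) - F)"
  unfolding Dc_def by (auto simp: V_app)

lemma card_Dc_le: assumes "finite F" shows "card (Dc c F) \<le> card F"
proof -
  have "(\<lambda>xs. xs @ [c]) ` Dc c F \<subseteq> F" unfolding Dc_def by auto
  then have "card ((\<lambda>xs. xs @ [c]) ` Dc c F) \<le> card F" using assms by (rule card_mono[rotated])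
  moreover have "card ((\<lambda>xs. xs @ [c]) ` Dc c F) = card (Dc c F)" by (rule card_image) (auto simp: inj_on_def)
  ultimately show ?thesis by simp
qed

lemma card_Dc_le2: assumes "finite F" "c1 \<noteq> c2" shows "card (Dc c1 F) + card (Dc c2 F) \<le> card F"
proof -
  have "(\<lambda>xs. xs @ [c1]) ` Dc c1 F \<union> (\<lambda>xs. xs @ [c2]) ` Dc c2 F \<subseteq> F" unfolding Dc_def by auto
  then have "card ((\<lambda>xs. xs @ [c1]) ` Dc c1 F \<union> (\<lambda>xs. xs @ [c2]) ` Dc c2 F) \<le> card F" using assms(1) by (intro card_mono)
  moreover have "finite (Dc c1 F)" "finite (Dc c2 F)"
    using assms(1) finite_vimageI[of F "\<lambda>xs. xs @ [c]" for c] unfolding Dc_def vimage_def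
    by (auto simp: inj_on_def)
  moreover have "card ((\<lambda>xs. xs @ [c1]) ` Dc c1 F \<union> (\<lambda>xs. xs @ [c2]) ` Dc c2 F)
     = card ((\<lambda>xs. xs @ [c1]) ` Dc c1 F) + card ((\<lambda>xs. xs @ [c2]) ` Dc c2 F)"
    by (rule card_Un_disjoint) (use assms(2) calculation(2,3) in auto)
  moreover have "card ((\<lambda>xs. xs @ [c]) ` Dc c F) = card (Dc c F)" for c by (rule card_image) (auto simp: inj_on_def)
  ultimately show ?thesis by simp
qed

lemma deg_new:
  assumes "1 \<le> k" "p \<in> V A k" "finite A"
  shows "card A - k \<le> card {u \<in> V A k. Adj A k p u}"
proof -
  have d: "distinct p" "length p = k" "set p \<subseteq> A" using assms(2) unfolding V_def by auto
  have "(\<lambda>a. a # tl p) ` (A - set p) \<subseteq> {u \<in> V A k. Adj A k p u}"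
  proof
    fix u assume "u \<in> (\<lambda>a. a # tl p) ` (A - set p)"
    then obtain a where a: "a \<in> A - set p" "u = a # tl p" by blast
    then have "Adj A k p u" using assms(2) by (intro AdjI2) auto
    then show "u \<in> {u \<in> V A k. Adj A k p u}" using Adj_V[OF _ assms(1)] by blast
  qed
  then have "card ((\<lambda>a. a # tl p) ` (A - set p)) \<le> card {u \<in> V A k. Adj A k p u}"
    using V_finite[OF assms(3), of k] by (intro card_mono) (auto intro: finite_subset)
  moreover have "card ((\<lambda>a. a # tl p) ` (A - set p)) = card (A - set p)" by (rule card_image) (auto simp: inj_on_def)
  moreover have "card (A - set p) = card A - k" using d assms(3) by (simp add: card_Diff_subset distinct_card)
  ultimately show ?thesis by simp
qed

lemma card_V: "finite A \<Longrightarrow> k \<le> card A \<Longrightarrow> card (V A k) = \<Prod>{card A - k + 1..card A}"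
proof -
  assume a: "finite A" "k \<le> card A"
  have "V A k = {xs. length xs = k \<and> distinct xs \<and> set xs \<subseteq> A}" unfolding V_def by auto
  then show ?thesis using card_lists_distinct_length_eq[OF a] by simp
qed




lemma arith_T1:
  assumes "1 \<le> k" "Suc k < n" "h \<le> n - Suc k"
  shows "n - 1 + h * (k - 1) \<le> (n - 2 + (h - 1) * (k - 2)) + (n - 2 + (h - 1) * (k - 2))"
proof (cases "h = 0 \<or> k = 1")
  case True then show ?thesis using assms by auto
next
  case False
  obtain h' where h': "h = Suc h'" using False by (cases h) auto
  obtain j where j: "k = Suc (Suc j)" using False assms(1) by (cases k; cases "k - 1") auto
  have hj: "h = Suc h'" "k = Suc (Suc j)" using h' j by auto
  have "n \<ge> h' + j + 4" using assms hj by simp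
  define m where "m = n - (h' + j + 4)"
  have m: "n = m + h' + j + 4" using \<open>n \<ge> h' + j + 4\<close> unfolding m_def by simp
  show ?thesis unfolding m hj by (simp add: algebra_simps)
qed

lemma arith_T2:
  assumes "2 \<le> k" "Suc k < n" "h \<le> n - Suc k"
  shows "n - 1 + h * (k - 1) \<le> (n - 2) * (n - 2)"
proof -
  define t where "t = n - 2"
  have t: "n = t + 2" using assms unfolding t_def by simp
  obtain x where x: "k = Suc x" using assms by (cases k) auto
  have x1: "1 \<le> x" "x \<le> t - 1" using assms t x by auto
  have "h \<le> t - 1" using assms t x by auto
  then have "h * x \<le> (t - 1) * (t - 1)" using x1 by (intro mult_le_mono) auto
  moreover have "t \<ge> 2" using assms t x by auto
  ultimately show ?thesis unfolding t x by (cases t) (auto simp: algebra_simps)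
qed

locale tstep =
  fixes A :: "'a set" and k h :: nat and F :: "'a list set"
  assumes IH: "\<And>(A' :: 'a set) h' F'. finite A' \<Longrightarrow> 1 \<le> k \<Longrightarrow> k < card A' \<Longrightarrow> h' \<le> card A' - k \<Longrightarrow> F' \<subseteq> V A' k
      \<Longrightarrow> min_degree_ge (V A' k - F') (Adj A' k) h' \<Longrightarrow> disconnected_on (V A' k - F') (Adj A' k)
      \<Longrightarrow> card A' - 1 + h' * (k - 2) \<le> card F'"
  and finA: "finite A" and k1: "1 \<le> k" and kn: "Suc k < card A" and hle: "h \<le> card A - Suc k"
  and FV: "F \<subseteq> V A (Suc k)" and mdeg: "min_degree_ge (V A (Suc k) - F) (Adj A (Suc k)) h"
  and small: "card F < card A - 1 + h * (k - 1)"
begin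

definition "W = V A (Suc k) - F"
definition "good c \<longleftrightarrow> (\<forall>x\<in>Dc c W. \<forall>y\<in>Dc c W. RR (Dc c W) (A - {c}) k x y)"

lemma WV: "W \<subseteq> V A (Suc k)" unfolding W_def by blast

lemma finF: "finite F" using finite_Vsub[OF finA FV] .

lemma degW: "v \<in> W \<Longrightarrow> h \<le> card {u\<in>W. Adj A (Suc k) v u}"
  using mdeg unfolding min_degree_ge_def W_def by blast

lemma bad_bound: assumes "c \<in> A" "\<not> good c" shows "card A - 2 + (h - 1) * (k - 2) \<le> card (Dc c F)"
proof -
  have cA: "card (A - {c}) = card A - 1" using finA assms(1) by simp
  have eq: "V (A - {c}) k - Dc c F = Dc c W" using Dc_diff[OF assms(1)] unfolding W_def .
  have md: "min_degree_ge (V (A - {c}) k - Dc c F) (Adj (A - {c}) k) (h - 1)"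
    unfolding eq min_degree_ge_def
  proof
    fix xs assume xs: "xs \<in> Dc c W"
    have "xs @ [c] \<in> W" using xs unfolding Dc_def by simp
    then have "h \<le> card {u\<in>W. Adj A (Suc k) (xs @ [c]) u}" using degW by blast
    then show "h - 1 \<le> card {u\<in>Dc c W. Adj (A - {c}) k xs u}"
      using deg_copy_le[OF k1 assms(1) WV xs finA] by linarith
  qed
  have dc: "disconnected_on (V (A - {c}) k - Dc c F) (Adj (A - {c}) k)"
    unfolding eq disconnected_on_def using assms(2) unfolding good_def by blast
  have DcV: "Dc c F \<subseteq> V (A - {c}) k" using Dc_V[OF FV] .
  have "card (A - {c}) - 1 + (h - 1) * (k - 2) \<le> card (Dc c F)"
  proof (rule IH)
    show "finite (A - {c})" using finA by simp
    show "1 \<le> k" using k1 .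
    show "k < card (A - {c})" using kn cA by simp
    show "h - 1 \<le> card (A - {c}) - k" using hle cA by simp
    show "Dc c F \<subseteq> V (A - {c}) k" using DcV .
    show "min_degree_ge (V (A - {c}) k - Dc c F) (Adj (A - {c}) k) (h - 1)" using md .
    show "disconnected_on (V (A - {c}) k - Dc c F) (Adj (A - {c}) k)" using dc .
  qed
  then show ?thesis using cA by simp
qed

lemma unique_bad: assumes "c1 \<in> A" "c2 \<in> A" "\<not> good c1" "\<not> good c2" shows "c1 = c2"
proof (rule ccontr)
  assume ne: "c1 \<noteq> c2"
  have "card (Dc c1 F) + card (Dc c2 F) \<le> card F" using card_Dc_le2[OF finF ne] .
  moreover have "card A - 1 + h * (k - 1) \<le> (card A - 2 + (h - 1) * (k - 2)) + (card A - 2 + (h - 1) * (k - 2))"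
    using arith_T1[OF k1 kn hle] .
  ultimately show False using bad_bound[OF assms(1,3)] bad_bound[OF assms(2,4)] small by linarith
qed

lemma alive: assumes "c \<in> A" shows "Dc c W \<noteq> {}"
proof -
  let ?V = "V (A - {c}) k"
  have cA: "card (A - {c}) = card A - 1" using finA assms(1) by simp
  have finA': "finite (A - {c})" using finA by simp
  have "card ?V = \<Prod>{card (A - {c}) - k + 1..card (A - {c})}" using card_V[OF finA'] cA kn by simp
  also have "\<dots> > 0" by (intro prod_pos) auto
  finally have Vne: "?V \<noteq> {}" by auto
  have md: "\<forall>v\<in>?V. h \<le> card {u\<in>?V. Adj (A - {c}) k v u}"
  proof
    fix v assume "v \<in> ?V"
    then have "card (A - {c}) - k \<le> card {u\<in>?V. Adj (A - {c}) k v u}" using deg_new[OF k1 _ finA'] by blast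
    then show "h \<le> card {u\<in>?V. Adj (A - {c}) k v u}" using hle cA by linarith
  qed
  have "card (A - {c}) + h * (k - 1) \<le> card (NC (A - {c}) k ?V)"
    by (rule W_lemma[OF finA' k1 _ _ subset_refl Vne md]) (use kn hle cA in auto)
  moreover have "card (NC (A - {c}) k ?V) \<le> card ?V"
    using NC_sub[OF k1 subset_refl] V_finite[OF finA'] by (intro card_mono) auto
  ultimately have "card F < card ?V" using small cA by linarith
  then have "card (Dc c F) < card ?V" using card_Dc_le[OF finF, of c] by linarith
  moreover have "?V \<subseteq> Dc c F \<Longrightarrow> card ?V \<le> card (Dc c F)"
    using finite_subset[OF Dc_V[OF FV, of c] V_finite[OF finA']] by (intro card_mono) auto
  ultimately have "\<not> ?V \<subseteq> Dc c F" by linarith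
  then show ?thesis using Dc_diff[OF assms(1), of k F] unfolding W_def by blast
qed


lemma Wsplit: assumes "x \<in> W" shows "x = butlast x @ [last x]" "last x \<in> A" "butlast x \<in> Dc (last x) W"
proof -
  have "x \<in> V A (Suc k)" using assms WV by blast
  then show e: "x = butlast x @ [last x]" and "last x \<in> A" using V_split by blast+
  show "butlast x \<in> Dc (last x) W" unfolding Dc_def by (simp only: mem_Collect_eq e[symmetric] assms)
qed

lemma reach_good: assumes v: "v \<in> W"
  shows "\<exists>c xs. c \<in> A \<and> good c \<and> xs \<in> Dc c W \<and> RR W A (Suc k) v (xs @ [c])"
proof (rule ccontr)
  assume no: "\<not> ?thesis"
  define Dv where "Dv = {x. RR W A (Suc k) v x}"
  have DvW: "Dv \<subseteq> W"
  proof
    fix x assume "x \<in> Dv"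
    then have "RR W A (Suc k) v x" unfolding Dv_def by simp
    then show "x \<in> W" using R_mem[OF _ v] by blast
  qed
  have vDv: "v \<in> Dv" unfolding Dv_def by simp
  have closed: "y \<in> Dv" if a: "x \<in> Dv" "y \<in> W" "Adj A (Suc k) x y" for x y
  proof -
    have r: "RR W A (Suc k) v x" using a(1) unfolding Dv_def by simp
    have xW: "x \<in> W" using a(1) DvW by blast
    have "RR W A (Suc k) v y" by (rule R_step[OF r xW a(2) a(3)])
    then show ?thesis unfolding Dv_def by simp
  qed
  define b where "b = last v"
  have notgood: "\<not> good (last x)" if x: "x \<in> Dv" for x
  proof
    assume g: "good (last x)"
    have "x \<in> W" using x DvW by blast
    then have "last x \<in> A" "butlast x \<in> Dc (last x) W" using Wsplit[of x] by blast+
    moreover have "RR W A (Suc k) v (butlast x @ [last x])"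
      using Wsplit(1)[OF \<open>x \<in> W\<close>] x unfolding Dv_def by (metis mem_Collect_eq)
    ultimately show False using no g by blast
  qed
  have bA: "b \<in> A" using Wsplit(2)[OF v] unfolding b_def .
  have lastb: "last x = b" if x: "x \<in> Dv" for x
  proof -
    have xW: "x \<in> W" using x DvW by blast
    have "\<not> good b" using notgood[OF vDv] unfolding b_def .
    then show ?thesis using unique_bad[OF Wsplit(2)[OF xW] bA notgood[OF x]] by blast
  qed
  define D' where "D' = Dc b Dv"
  have Dveq: "x = butlast x @ [b]" "butlast x \<in> D'" if x: "x \<in> Dv" for x
  proof -
    have "x = butlast x @ [last x]" using Wsplit(1)[of x] x DvW by blast
    then show e: "x = butlast x @ [b]" using lastb[OF x] by metis
    show "butlast x \<in> D'" unfolding D'_def Dc_def by (simp only: mem_Collect_eq e[symmetric] x)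
  qed
  have DvV: "Dv \<subseteq> V A (Suc k)" using DvW WV by blast
  have D'V: "D' \<subseteq> V (A - {b}) k" unfolding D'_def using Dc_V[OF DvV] .
  have D'ne: "D' \<noteq> {}" using Dveq(2)[OF vDv] by blast
  have finD': "finite D'" using finite_Vsub[OF _ D'V] finA by simp
  have md: "\<forall>xs\<in>D'. h \<le> card {ys\<in>D'. Adj (A - {b}) k xs ys}"
  proof
    fix xs assume xs: "xs \<in> D'"
    have xsV: "xs \<in> V (A - {b}) k" using xs D'V by blast
    have xD: "xs @ [b] \<in> Dv" using xs unfolding D'_def Dc_def by simp
    then have hdeg: "h \<le> card {u\<in>W. Adj A (Suc k) (xs @ [b]) u}" using degW DvW by blast
    have "{u\<in>W. Adj A (Suc k) (xs @ [b]) u} \<subseteq> (\<lambda>ys. ys @ [b]) ` {ys\<in>D'. Adj (A - {b}) k xs ys}"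
    proof
      fix u assume u: "u \<in> {u\<in>W. Adj A (Suc k) (xs @ [b]) u}"
      then have uD: "u \<in> Dv" using closed[OF xD] by blast
      have "Adj A (Suc k) (xs @ [b]) (butlast u @ [b])" using u Dveq(1)[OF uD] by (metis (mono_tags) mem_Collect_eq)
      then have "Adj (A - {b}) k xs (butlast u)"
        using Adj_app_iff[OF k1 xsV bA, of "butlast u"] by simp
      then show "u \<in> (\<lambda>ys. ys @ [b]) ` {ys\<in>D'. Adj (A - {b}) k xs ys}"
        using Dveq[OF uD] by blast
    qed
    then have "card {u\<in>W. Adj A (Suc k) (xs @ [b]) u} \<le> card ((\<lambda>ys. ys @ [b]) ` {ys\<in>D'. Adj (A - {b}) k xs ys})"
      using finD' by (intro card_mono) auto
    also have "\<dots> \<le> card {ys\<in>D'. Adj (A - {b}) k xs ys}" using finD' by (intro card_image_le) auto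
    finally show "h \<le> card {ys\<in>D'. Adj (A - {b}) k xs ys}" using hdeg by linarith
  qed
  have cAb: "card (A - {b}) = card A - 1" using finA bA by simp
  have Wl: "card (A - {b}) + h * (k - 1) \<le> card (NC (A - {b}) k D')"
    by (rule W_lemma[OF _ k1 _ _ D'V D'ne md]) (use finA kn hle cAb in auto)
  let ?N = "NC (A - {b}) k D'"
  have finN: "finite ?N" using NC_finite[OF _ k1 D'V] finA by simp
  have sub1: "(\<lambda>ys. ys @ [b]) ` (?N - D') \<subseteq> F"
  proof
    fix z assume "z \<in> (\<lambda>ys. ys @ [b]) ` (?N - D')"
    then obtain ys where z: "z = ys @ [b]" "ys \<in> ?N" "ys \<notin> D'" by blast
    then obtain xs where xs: "xs \<in> D'" "Adj (A - {b}) k xs ys" unfolding NC_def by blast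
    have xsV: "xs \<in> V (A - {b}) k" using xs D'V by blast
    have ad: "Adj A (Suc k) (xs @ [b]) z" using Adj_app_iff[OF k1 xsV bA] xs z by simp
    have zV: "z \<in> V A (Suc k)" using Adj_V(1)[OF ad] by simp
    have xD: "xs @ [b] \<in> Dv" using xs unfolding D'_def Dc_def by simp
    show "z \<in> F"
    proof (rule ccontr)
      assume "z \<notin> F"
      then have "z \<in> W" using zV unfolding W_def by blast
      then have "z \<in> Dv" using closed[OF xD _ ad] by blast
      then have "ys \<in> D'" using z(1) unfolding D'_def Dc_def by simp
      then show False using z(3) by simp
    qed
  qed
  have crl: "Adj A (Suc k) p (crossv p) \<and> last (crossv p) \<noteq> b" if p: "p \<in> Dv" for p
  proof -
    have pV: "butlast p \<in> V (A - {b}) k" using Dveq(2)[OF p] D'V by blast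
    have "Adj A (Suc k) (butlast p @ [b]) (crossv (butlast p @ [b])) \<and> last (crossv (butlast p @ [b])) \<noteq> b"
      using Adj_crossv(1,2)[OF k1 pV bA] by blast
    moreover have e: "butlast p @ [b] = p" using Dveq(1)[OF p] by simp
    ultimately show ?thesis by simp
  qed
  have sub2: "crossv ` Dv \<subseteq> F"
  proof
    fix z assume "z \<in> crossv ` Dv"
    then obtain p where p: "p \<in> Dv" "z = crossv p" by blast
    have ad: "Adj A (Suc k) p z" "last z \<noteq> b" using crl[OF p(1)] p(2) by auto
    have zV: "z \<in> V A (Suc k)" using Adj_V(1)[OF ad(1)] by simp
    show "z \<in> F"
    proof (rule ccontr)
      assume "z \<notin> F"
      then have "z \<in> W" using zV unfolding W_def by blast
      then have "z \<in> Dv" using closed[OF p(1) _ ad(1)] by blast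
      then show False using lastb ad(2) by blast
    qed
  qed
  have disj: "(\<lambda>ys. ys @ [b]) ` (?N - D') \<inter> crossv ` Dv = {}"
  proof (rule ccontr)
    assume "(\<lambda>ys. ys @ [b]) ` (?N - D') \<inter> crossv ` Dv \<noteq> {}"
    then obtain ys p where yp: "p \<in> Dv" "ys @ [b] = crossv p" by blast
    have "last (crossv p) = b" using yp(2)[symmetric] by simp
    then show False using crl[OF yp(1)] by simp
  qed
  have finDv: "finite Dv" using finite_Vsub[OF finA DvV] .
  have cDv: "card (crossv ` Dv) = card Dv"
  proof (rule card_image, rule inj_on_subset[OF inj_crossv])
    show "Dv \<subseteq> {p. 2 \<le> length p}"
    proof
      fix p assume "p \<in> Dv"
      then have "length p = Suc k" using DvV unfolding V_def by blast
      then show "p \<in> {p. 2 \<le> length p}" using k1 by simp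
    qed
  qed
  have "Dv = (\<lambda>ys. ys @ [b]) ` D'"
  proof
    show "Dv \<subseteq> (\<lambda>ys. ys @ [b]) ` D'" using Dveq by blast
    show "(\<lambda>ys. ys @ [b]) ` D' \<subseteq> Dv" unfolding D'_def Dc_def by auto
  qed
  then have cDv2: "card Dv = card D'" by (simp add: card_image inj_on_def)
  have "card ((\<lambda>ys. ys @ [b]) ` (?N - D') \<union> crossv ` Dv) \<le> card F"
    using finF sub1 sub2 by (intro card_mono) auto
  moreover have "card ((\<lambda>ys. ys @ [b]) ` (?N - D') \<union> crossv ` Dv)
     = card ((\<lambda>ys. ys @ [b]) ` (?N - D')) + card (crossv ` Dv)"
    by (rule card_Un_disjoint) (use finN finDv disj in auto)
  moreover have "card ((\<lambda>ys. ys @ [b]) ` (?N - D')) = card (?N - D')" by (simp add: card_image inj_on_def)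
  moreover have "card ?N \<le> card (?N - D') + card D'"
  proof -
    have "?N \<subseteq> (?N - D') \<union> D'" by blast
    then have "card ?N \<le> card ((?N - D') \<union> D')" using finN finD' by (intro card_mono) auto
    also have "\<dots> \<le> card (?N - D') + card D'" by (rule card_Un_le)
    finally show ?thesis .
  qed
  ultimately have "card A - 1 + h * (k - 1) \<le> card F" using Wl cAb cDv cDv2 by linarith
  then show False using small by linarith
qed

end




lemma mult_ge_sum1: "1 \<le> (a::nat) \<Longrightarrow> 1 \<le> b \<Longrightarrow> a + b - 1 \<le> a * b"
  by (cases a; cases b) auto

lemma prod_ge_mem: assumes "(x::nat) \<in> {a..b}" shows "x \<le> \<Prod>{a..b} \<or> \<Prod>{a..b} = 0"
proof (cases "\<Prod>{a..b} = 0")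
  case False
  have "x dvd \<Prod>{a..b}" using assms by (intro dvd_prodI[of "{a..b}" x "\<lambda>y. y", simplified]) auto
  then show ?thesis using False by (simp add: dvd_imp_le)
qed simp

context tstep
begin

lemma connected: assumes u: "u \<in> W" and v: "v \<in> W" shows "RR W A (Suc k) u v"
proof (rule ccontr)
  assume nuv: "\<not> RR W A (Suc k) u v"
  have goodconn: "RR W A (Suc k) (x @ [c]) (y @ [c])"
    if "c \<in> A" "good c" "x \<in> Dc c W" "y \<in> Dc c W" for c x y
  proof -
    have "RR (Dc c W) (A - {c}) k x y" using that(2-4) unfolding good_def by blast
    then show ?thesis by (rule lift[OF k1 that(1) WV])
  qed
  define I where "I = {c\<in>A. good c \<and> (\<exists>xs\<in>Dc c W. RR W A (Suc k) u (xs @ [c]))}"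
  define G where "G = {c\<in>A. good c}"
  define J where "J = G - I"
  have Iall: "RR W A (Suc k) u (y @ [c])" if cI: "c \<in> I" and yW: "y \<in> Dc c W" for c y
  proof -
    obtain xs where xs: "xs \<in> Dc c W" "RR W A (Suc k) u (xs @ [c])" "c \<in> A" "good c"
      using cI unfolding I_def by blast
    show ?thesis using R_trans[OF xs(2) goodconn[OF xs(3,4,1) yW]] .
  qed
  obtain cu xu where cu: "cu \<in> A" "good cu" "xu \<in> Dc cu W" "RR W A (Suc k) u (xu @ [cu])"
    using reach_good[OF u] by blast
  have cuI: "cu \<in> I" unfolding I_def using cu by blast
  obtain cv xv where cv: "cv \<in> A" "good cv" "xv \<in> Dc cv W" "RR W A (Suc k) v (xv @ [cv])"
    using reach_good[OF v] by blast
  have cvJ: "cv \<in> J"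
  proof -
    have "cv \<notin> I"
    proof
      assume "cv \<in> I"
      then have "RR W A (Suc k) u (xv @ [cv])" using Iall cv(3) by blast
      moreover have "RR W A (Suc k) (xv @ [cv]) v" using R_sym[OF _ cv(4)] by simp
      ultimately show False using nuv R_trans by metis
    qed
    then show ?thesis unfolding J_def G_def using cv by blast
  qed
  have IA: "I \<subseteq> A" and JA: "J \<subseteq> A" and IJ: "I \<inter> J = {}" and IJG: "I \<union> J = G"
    unfolding I_def J_def G_def by auto
  have cross: "(c2 # m) @ [c1] \<in> F \<or> (c1 # m) @ [c2] \<in> F"
    if c: "c1 \<in> I" "c2 \<in> J" "m \<in> V (A - {c1, c2}) (k - 1)" for c1 c2 m
  proof (rule ccontr)
    assume nF: "\<not> ((c2 # m) @ [c1] \<in> F \<or> (c1 # m) @ [c2] \<in> F)"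
    have ne: "c1 \<noteq> c2" using c IJ by blast
    have cA: "c1 \<in> A" "c2 \<in> A" using c IA JA by blast+
    have md: "distinct m" "length m = k - 1" "set m \<subseteq> A - {c1, c2}" using c(3) unfolding V_def by auto
    have m1: "c2 # m \<in> V (A - {c1}) k" using md ne cA k1 unfolding V_def by auto
    have m2: "c1 # m \<in> V (A - {c2}) k" using md ne cA k1 unfolding V_def by auto
    have pV: "(c2 # m) @ [c1] \<in> V A (Suc k)" using V_app[THEN iffD2, OF conjI[OF m1 cA(1)]] .
    have qV: "(c1 # m) @ [c2] \<in> V A (Suc k)" using V_app[THEN iffD2, OF conjI[OF m2 cA(2)]] .
    have pW: "(c2 # m) @ [c1] \<in> W" using pV nF unfolding W_def by blast
    have qW: "(c1 # m) @ [c2] \<in> W" using qV nF unfolding W_def by blast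
    have "c2 # m \<in> Dc c1 W" using pW unfolding Dc_def by simp
    then have r1: "RR W A (Suc k) u ((c2 # m) @ [c1])" using Iall[OF c(1)] by blast
    have "Adj A (Suc k) ((c2 # m) @ [c1]) (crossv ((c2 # m) @ [c1]))" using Adj_crossv(1)[OF k1 m1 cA(1)] .
    moreover have "crossv ((c2 # m) @ [c1]) = (c1 # m) @ [c2]" using crossv_app[of "c2 # m" c1] by simp
    ultimately have "Adj A (Suc k) ((c2 # m) @ [c1]) ((c1 # m) @ [c2])" by simp
    then have r2: "RR W A (Suc k) u ((c1 # m) @ [c2])" using R_step[OF r1 pW qW] by blast
    have "c1 # m \<in> Dc c2 W" using qW unfolding Dc_def by simp
    then have "c2 \<in> I" using r2 cA(2) c(2) unfolding I_def J_def G_def by blast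
    then show False using c(2) IJ by blast
  qed
  define S where "S = (SIGMA x:I \<times> J. V (A - {fst x, snd x}) (k - 1))"
  define g where "g = (\<lambda>(x::'a \<times> 'a, m::'a list). if (snd x # m) @ [fst x] \<in> F
      then (snd x # m) @ [fst x] else (fst x # m) @ [snd x])"
  have gF: "g ` S \<subseteq> F"
  proof
    fix z assume "z \<in> g ` S"
    then obtain c1 c2 m where cm: "c1 \<in> I" "c2 \<in> J" "m \<in> V (A - {c1, c2}) (k - 1)" "z = g ((c1, c2), m)"
      unfolding S_def by auto
    show "z \<in> F" using cross[OF cm(1-3)] cm(4) unfolding g_def by auto
  qed
  have ginj: "inj_on g S"
  proof (rule inj_onI)
    fix a b assume a: "a \<in> S" and b: "b \<in> S" and e: "g a = g b"
    obtain c1 c2 m where ca: "a = ((c1, c2), m)" "c1 \<in> I" "c2 \<in> J" using a unfolding S_def by auto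
    obtain d1 d2 m' where cb: "b = ((d1, d2), m')" "d1 \<in> I" "d2 \<in> J" using b unfolding S_def by auto
    have "c1 \<noteq> d2" "d1 \<noteq> c2" using ca cb IJ by blast+
    then show "a = b" using e ca(1) cb(1) unfolding g_def by (auto split: if_splits)
  qed
  have finI: "finite I" and finJ: "finite J" using finA IA JA finite_subset by blast+
  have cS: "card S = card I * card J * \<Prod>{card A - 2 - (k - 1) + 1..card A - 2}"
  proof -
    have "card S = (\<Sum>x\<in>I \<times> J. card (V (A - {fst x, snd x}) (k - 1)))"
      unfolding S_def using finI finJ finA by (intro card_SigmaI) (auto intro: V_finite)
    also have "\<dots> = (\<Sum>x\<in>I \<times> J. \<Prod>{card A - 2 - (k - 1) + 1..card A - 2})"
    proof (rule sum.cong[OF refl])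
      fix x assume x: "x \<in> I \<times> J"
      then have "fst x \<in> A" "snd x \<in> A" "fst x \<noteq> snd x" using IA JA IJ by auto
      then have cc: "card (A - {fst x, snd x}) = card A - 2" using finA by (simp add: card_Diff_subset)
      show "card (V (A - {fst x, snd x}) (k - 1)) = \<Prod>{card A - 2 - (k - 1) + 1..card A - 2}"
        using card_V[of "A - {fst x, snd x}" "k - 1"] cc finA kn by simp
    qed
    also have "\<dots> = card I * card J * \<Prod>{card A - 2 - (k - 1) + 1..card A - 2}"
      by (simp add: card_cartesian_product)
    finally show ?thesis .
  qed
  have "card S \<le> card F" using card_inj_on_le[OF ginj gF finF] .
  have Gcard: "card A - 1 \<le> card G"
  proof -
    have "\<forall>x\<in>A - G. \<forall>y\<in>A - G. x = y" unfolding G_def using unique_bad by blast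
    then have "card (A - G) \<le> Suc 0" using card_le_Suc0_iff_eq[of "A - G"] finA by blast
    moreover have "card (A - G) = card A - card G" using finA unfolding G_def by (intro card_Diff_subset) auto
    ultimately show ?thesis by linarith
  qed
  have cIJ: "card I + card J = card G" using card_Un_disjoint[OF finI finJ IJ] IJG by simp
  have I1: "1 \<le> card I" using cuI finI by (metis One_nat_def Suc_leI card_gt_0_iff empty_iff)
  have J1: "1 \<le> card J" using cvJ finJ by (metis One_nat_def Suc_leI card_gt_0_iff empty_iff)
  have IJm: "card G - 1 \<le> card I * card J" using mult_ge_sum1[OF I1 J1] cIJ by simp
  show False
  proof (cases "k = 1")
    case True
    have "G = A"
    proof -
      have "good c" if "c \<in> A" for c
        unfolding good_def using conn1[of "Dc c W" "A - {c}"] Dc_V[OF WV] True by blast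
      then show ?thesis unfolding G_def by blast
    qed
    then have "card A - 1 \<le> card I * card J" using IJm by simp
    moreover have "{card A - 2 - (k - 1) + 1..card A - 2} = {}" using True kn by auto
    ultimately show False using cS \<open>card S \<le> card F\<close> small True by simp
  next
    case False
    then have k2: "2 \<le> k" using k1 by simp
    have mem: "card A - 2 \<in> {card A - 2 - (k - 1) + 1..card A - 2}" using k2 kn by auto
    have "\<Prod>{card A - 2 - (k - 1) + 1..card A - 2} \<noteq> 0" using kn by (auto simp: prod_zero_iff)
    then have P: "card A - 2 \<le> \<Prod>{card A - 2 - (k - 1) + 1..card A - 2}" using prod_ge_mem[OF mem] by auto
    have "card A - 2 \<le> card I * card J" using IJm Gcard by linarith
    then have "(card A - 2) * (card A - 2) \<le> card S" unfolding cS using P by (intro mult_le_mono) auto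
    then show False using arith_T2[OF k2 kn hle] \<open>card S \<le> card F\<close> small by linarith
  qed
qed

end


lemma T_lemma:
  assumes "finite A" "1 \<le> k" "k < card A" "h \<le> card A - k" "F \<subseteq> V A k"
    "min_degree_ge (V A k - F) (Adj A k) h" "disconnected_on (V A k - F) (Adj A k)"
  shows "card A - 1 + h * (k - 2) \<le> card F"
  using assms
proof (induction k arbitrary: A h F)
  case 0 then show ?case by simp
next
  case (Suc k)
  note prems = Suc.prems
  show ?case
  proof (cases "k = 0")
    case True
    have "\<forall>u\<in>V A (Suc k) - F. \<forall>v\<in>V A (Suc k) - F. RR (V A (Suc k) - F) A (Suc k) u v"
      using conn1[of "V A 1 - F" A] True by auto
    then show ?thesis using prems(7) unfolding disconnected_on_def by blast
  next
    case False
    show ?thesis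
    proof (rule ccontr)
      assume "\<not> ?thesis"
      then have small: "card F < card A - 1 + h * (k - 1)" by simp
      interpret ts: tstep A k h F
      proof (unfold_locales)
        show "\<And>(A' :: 'a set) h' F'. finite A' \<Longrightarrow> 1 \<le> k \<Longrightarrow> k < card A' \<Longrightarrow> h' \<le> card A' - k \<Longrightarrow> F' \<subseteq> V A' k
          \<Longrightarrow> min_degree_ge (V A' k - F') (Adj A' k) h' \<Longrightarrow> disconnected_on (V A' k - F') (Adj A' k)
          \<Longrightarrow> card A' - 1 + h' * (k - 2) \<le> card F'" using Suc.IH by blast
        show "finite A" by (rule prems(1))
        show "1 \<le> k" using False by simp
        show "Suc k < card A" by (rule prems(3))
        show "h \<le> card A - Suc k" by (rule prems(4))
        show "F \<subseteq> V A (Suc k)" by (rule prems(5))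
        show "min_degree_ge (V A (Suc k) - F) (Adj A (Suc k)) h" by (rule prems(6))
        show "card F < card A - 1 + h * (k - 1)" by (rule small)
      qed
      have "\<forall>u\<in>V A (Suc k) - F. \<forall>v\<in>V A (Suc k) - F. RR (V A (Suc k) - F) A (Suc k) u v"
        using ts.connected unfolding ts.W_def by blast
      then show False using prems(7) unfolding disconnected_on_def by blast
    qed
  qed
qed




definition "KK t A0 = (\<lambda>a. a # t) ` A0"
definition "F1 A t A0 = (\<lambda>a. a # t) ` (A - set t - A0)"
definition "F2 t A0 = (\<lambda>(i, a). t ! i # t[i := a]) ` ({..<length t} \<times> A0)"
definition "SS A t A0 = F1 A t A0 \<union> F2 t A0"

lemma upd_unique:
  assumes "distinct t" "a \<notin> set t" "i < length t" "j < length t" "t[i := a] = t[j := a']"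
  shows "i = j"
proof (rule ccontr)
  assume "i \<noteq> j"
  then have "t[j := a'] ! i = t ! i" by simp
  moreover have "t[i := a] ! i = a" using assms(3) by simp
  ultimately have "a = t ! i" using assms(5) by simp
  then show False using assms(2,3) nth_mem by metis
qed

context
  fixes A :: "'a set" and k h :: nat and t :: "'a list" and A0 :: "'a set"
  assumes finA: "finite A" and k2: "2 \<le> k" and kn: "k < card A" and hle: "h \<le> card A - k"
    and tV: "t \<in> V A (k - 1)" and A0s: "A0 \<subseteq> A - set t" and cA0: "card A0 = Suc h"
begin

lemma t_props: "distinct t" "length t = k - 1" "set t \<subseteq> A" "t \<noteq> []"
  using tV k2 unfolding V_def by auto

lemma upd_props:
  assumes "i < length t" "a \<in> A - set t"
  shows "distinct (t[i := a])" "set (t[i := a]) = insert a (set t - {t ! i})" "length (t[i := a]) = k - 1"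
    "t ! i \<notin> set (t[i := a])" "t ! i \<noteq> a"
proof -
  show "distinct (t[i := a])" using t_props(1) assms by (intro distinct_list_update) auto
  show s: "set (t[i := a]) = insert a (set t - {t ! i})" using set_update_distinct[OF t_props(1) assms(1)] .
  show "length (t[i := a]) = k - 1" using t_props by simp
  show "t ! i \<noteq> a" using assms nth_mem by fastforce
  then show "t ! i \<notin> set (t[i := a])" using s by blast
qed

lemma KK_V: "KK t A0 \<subseteq> V A k"
  unfolding KK_def V_def using t_props A0s k2 by auto

lemma F1_V: "F1 A t A0 \<subseteq> V A k"
  unfolding F1_def V_def using t_props k2 by auto

lemma F2_V: "F2 t A0 \<subseteq> V A k"
proof
  fix z assume "z \<in> F2 t A0"
  then obtain i a where ia: "i < length t" "a \<in> A0" "z = t ! i # t[i := a]" unfolding F2_def by auto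
  have aA: "a \<in> A - set t" using ia(2) A0s by blast
  note up = upd_props[OF ia(1) aA]
  have "set z \<subseteq> A" using ia(3) up(2) t_props(3) aA ia(1) nth_mem by fastforce
  moreover have "distinct z" using ia(3) up by simp
  moreover have "length z = k" using ia(3) up(3) k2 by simp
  ultimately show "z \<in> V A k" unfolding V_def by simp
qed

lemma SS_V: "SS A t A0 \<subseteq> V A k" unfolding SS_def using F1_V F2_V by blast

lemma card_SS: "card (SS A t A0) \<le> card A - 1 + h * (k - 2)"
proof -
  have finA0: "finite A0" using cA0 card.infinite by fastforce
  have "card (SS A t A0) \<le> card (F1 A t A0) + card (F2 t A0)" unfolding SS_def by (rule card_Un_le)
  moreover have "card (F1 A t A0) \<le> card (A - set t - A0)" unfolding F1_def by (rule card_image_le) (use finA in simp)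
  moreover have "card (F2 t A0) \<le> card ({..<length t} \<times> A0)" unfolding F2_def by (rule card_image_le) (use finA0 in simp)
  moreover have "card ({..<length t} \<times> A0) = (k - 1) * Suc h" using t_props(2) cA0 by (simp add: card_cartesian_product)
  moreover have "card (A - set t - A0) = card A - (k - 1) - Suc h"
  proof -
    have "card (A - set t) = card A - (k - 1)"
      using t_props finA by (simp add: card_Diff_subset distinct_card)
    then show ?thesis using A0s finA0 cA0 by (simp add: card_Diff_subset)
  qed
  moreover have "card A - (k - 1) - Suc h + (k - 1) * Suc h = card A - 1 + h * (k - 2)"
  proof -
    obtain j where j: "k = Suc (Suc j)" using k2 by (metis add_2_eq_Suc le_Suc_ex)
    have "card A \<ge> k + h" using kn hle by simp
    then show ?thesis unfolding j by (simp add: algebra_simps)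
  qed
  ultimately show ?thesis by linarith
qed

lemma KK_notS: assumes "x \<in> KK t A0" shows "x \<notin> SS A t A0"
proof
  assume xS: "x \<in> SS A t A0"
  obtain a where a: "a \<in> A0" "x = a # t" using assms unfolding KK_def by blast
  have at: "a \<notin> set t" using a A0s by blast
  show False
  proof (cases "x \<in> F1 A t A0")
    case True then show False using a unfolding F1_def by auto
  next
    case False
    then have "x \<in> F2 t A0" using xS unfolding SS_def by blast
    then obtain i b where "i < length t" "x = t ! i # t[i := b]" unfolding F2_def by auto
    then show False using a(2) at nth_mem by fastforce
  qed
qed

lemma K_closed:
  assumes "x \<in> KK t A0" "y \<in> V A k - SS A t A0" "Adj A k x y"
  shows "y \<in> KK t A0"
proof -
  obtain a where a: "a \<in> A0" "x = a # t" using assms(1) unfolding KK_def by blast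
  from assms(3) show ?thesis
  proof (cases rule: AdjE)
    case (swap i)
    obtain i' where i': "i = Suc i'" using swap(2) by (cases i) auto
    have il: "i' < length t" using swap(3) i' t_props(2) k2 by simp
    have "y = t ! i' # t[i' := a]" using swap(4) a(2) i' by simp
    then have "y \<in> F2 t A0" unfolding F2_def using il a(1) by force
    then show ?thesis using assms(2) unfolding SS_def by blast
  next
    case (new b)
    have y: "y = b # t" using new a by simp
    show ?thesis
    proof (cases "b \<in> A0")
      case True then show ?thesis using y unfolding KK_def by blast
    next
      case False
      then have "y \<in> F1 A t A0" using y new(2) a unfolding F1_def by auto
      then show ?thesis using assms(2) unfolding SS_def by blast
    qed
  qed
qed

lemma R_K: assumes "RR (V A k - SS A t A0) A k x y" "x \<in> KK t A0" shows "y \<in> KK t A0"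
  using assms
proof (induction rule: rtranclp_induct)
  case base then show ?case by simp
next
  case (step y z)
  then show ?case using K_closed unfolding induced_adj_def by blast
qed

lemma exists_far: "\<exists>w. w \<in> V A k - SS A t A0 \<and> w \<notin> KK t A0"
proof -
  have finA0: "finite A0" using cA0 card.infinite by fastforce
  obtain \<alpha> where \<alpha>: "\<alpha> \<in> A0" using cA0 by (metis card.empty ex_in_conv nat.distinct(1))
  have cAt: "card (A - set t) = card A - (k - 1)"
    using t_props finA by (simp add: card_Diff_subset distinct_card)
  have \<alpha>A': "\<alpha> \<in> A - set t" using \<alpha> A0s by blast
  have "card (A - set t - {\<alpha>}) = card (A - set t) - 1" using \<alpha>A' finA by (simp add: card_Diff_singleton)
  then have "card (A - set t - {\<alpha>}) \<ge> 1" using kn k2 cAt by simp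
  then obtain x where x: "x \<in> A - set t - {\<alpha>}" by (metis card.empty ex_in_conv not_one_le_zero)
  have \<alpha>A: "\<alpha> \<in> A - set t" using \<alpha> A0s by blast
  have t0: "0 < length t" using t_props k2 by simp
  note up = upd_props[OF t0 \<alpha>A]
  define w where "w = x # t[0 := \<alpha>]"
  have wV: "w \<in> V A k"
  proof -
    have "x \<notin> set (t[0 := \<alpha>])" using up(2) x by auto
    moreover have "set (t[0 := \<alpha>]) \<subseteq> A" using up(2) t_props(3) \<alpha>A by auto
    ultimately show ?thesis unfolding w_def V_def using up x k2 by auto
  qed
  have tne: "t[0 := \<alpha>] \<noteq> t" using up(5) t0 by (metis nth_list_update_eq)
  have wK: "w \<notin> KK t A0" using tne unfolding w_def KK_def by auto
  have wF1: "w \<notin> F1 A t A0" using tne unfolding w_def F1_def by auto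
  have wF2: "w \<notin> F2 t A0"
  proof
    assume "w \<in> F2 t A0"
    then obtain i b where "i < length t" "w = t ! i # t[i := b]" unfolding F2_def by auto
    then have "x = t ! i" unfolding w_def by simp
    then show False using x \<open>i < length t\<close> nth_mem by fastforce
  qed
  show ?thesis using wV wK wF1 wF2 unfolding SS_def by blast
qed

lemma mindeg_SS: "min_degree_ge (V A k - SS A t A0) (Adj A k) h"
  unfolding min_degree_ge_def
proof
  fix v assume v: "v \<in> V A k - SS A t A0"
  let ?W = "V A k - SS A t A0"
  let ?N = "{u\<in>?W. Adj A k v u}"
  have finN: "finite ?N" using finite_Vsub[OF finA, of ?N k] by blast
  have finA0: "finite A0" using cA0 card.infinite by fastforce
  have k1: "1 \<le> k" using k2 by simp
  show "h \<le> card ?N"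
  proof (cases "v \<in> KK t A0")
    case True
    obtain a where a: "a \<in> A0" "v = a # t" using True unfolding KK_def by blast
    have "(\<lambda>b. b # t) ` (A0 - {a}) \<subseteq> ?N"
    proof
      fix u assume "u \<in> (\<lambda>b. b # t) ` (A0 - {a})"
      then obtain b where b: "b \<in> A0 - {a}" "u = b # t" by blast
      have uK: "u \<in> KK t A0" using b unfolding KK_def by blast
      have "Adj A k v u" using b a A0s v by (intro AdjI2[of _ _ _ b]) auto
      then show "u \<in> ?N" using uK KK_notS KK_V by blast
    qed
    then have "card ((\<lambda>b. b # t) ` (A0 - {a})) \<le> card ?N" using finN by (rule card_mono[rotated])
    moreover have "card ((\<lambda>b. b # t) ` (A0 - {a})) = h"
      using cA0 a(1) finA0 by (subst card_image) (auto simp: inj_on_def)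
    ultimately show ?thesis by simp
  next
    case False
    have vV: "v \<in> V A k" using v by blast
    then obtain x s where xs: "v = x # s" using k2 unfolding V_def by (cases v) auto
    have vp: "distinct v" "length v = k" "set v \<subseteq> A" using vV unfolding V_def by auto
    have xs': "x \<notin> set s" "length s = k - 1" "distinct s" using vp xs by auto
    have snt: "s \<noteq> t"
    proof
      assume st: "s = t"
      have "x \<in> A - set t" using vp xs st by auto
      then show False
      proof (cases "x \<in> A0")
        case True then show False using False xs st unfolding KK_def by blast
      next
        case False
        then have "v \<in> F1 A t A0" using \<open>x \<in> A - set t\<close> xs st unfolding F1_def by blast
        then show False using v unfolding SS_def by blast
      qed
    qed
    define Cw where "Cw = (\<lambda>b. b # s) ` (A - set v)"
    have cCw: "card Cw = card A - k"
    proof -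
      have "card Cw = card (A - set v)" unfolding Cw_def by (rule card_image) (auto simp: inj_on_def)
      also have "\<dots> = card A - k" using vp finA by (simp add: card_Diff_subset distinct_card)
      finally show ?thesis .
    qed
    have CwAdj: "u \<in> V A k \<and> Adj A k v u" if uC: "u \<in> Cw" for u
    proof -
      obtain b where b: "b \<in> A - set v" "u = b # s" using uC unfolding Cw_def by blast
      have "Adj A k v u" using b xs vV by (intro AdjI2[of _ _ _ b]) auto
      then show ?thesis using Adj_V[OF _ k1] by blast
    qed
    have CwF1: "u \<notin> F1 A t A0" if "u \<in> Cw" for u
      using that snt unfolding Cw_def F1_def by auto
    show ?thesis
    proof (cases "\<exists>i a. i < length t \<and> a \<in> A0 \<and> s = t[i := a]")
      case False
      have "Cw \<subseteq> ?N"
      proof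
        fix u assume u: "u \<in> Cw"
        have "u \<notin> F2 t A0"
        proof
          assume "u \<in> F2 t A0"
          then obtain i a where "i < length t" "a \<in> A0" "u = t ! i # t[i := a]" unfolding F2_def by auto
          moreover obtain b where "u = b # s" using u unfolding Cw_def by blast
          ultimately show False using False by auto
        qed
        then show "u \<in> ?N" using CwAdj[OF u] CwF1[OF u] unfolding SS_def by blast
      qed
      then have "card Cw \<le> card ?N" using finN by (rule card_mono[rotated])
      then show ?thesis using cCw hle by linarith
    next
      case True
      then obtain i a where ia: "i < length t" "a \<in> A0" "s = t[i := a]" by blast
      have aA: "a \<in> A - set t" using ia(2) A0s by blast
      note up = upd_props[OF ia(1) aA]
      define z where "z = t ! i # s"
      have sub1: "Cw - {z} \<subseteq> ?N"
      proof
        fix u assume u: "u \<in> Cw - {z}"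
        have "u \<notin> F2 t A0"
        proof
          assume "u \<in> F2 t A0"
          then obtain j a' where ja: "j < length t" "a' \<in> A0" "u = t ! j # t[j := a']" unfolding F2_def by auto
          obtain b where b: "u = b # s" using u unfolding Cw_def by blast
          have "t[i := a] = t[j := a']" using ja(3) b ia(3) by simp
          then have "i = j" using upd_unique[OF t_props(1) _ ia(1) ja(1)] aA by blast
          then have "u = z" using ja(3) b unfolding z_def by simp
          then show False using u by blast
        qed
        then show "u \<in> ?N" using CwAdj CwF1 u unfolding SS_def by blast
      qed
      define y where "y = a # t[i := x]"
      have sia: "s ! i = a" using ia up(3) k2 by (simp add: ia(3))
      have xti: "x \<noteq> t ! i"
      proof
        assume "x = t ! i"
        then have "v \<in> F2 t A0" using xs ia unfolding F2_def by force
        then show False using v unfolding SS_def by blast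
      qed
      have yeq: "y = (x # s)[0 := (x # s) ! Suc i, Suc i := (x # s) ! 0]"
        unfolding y_def using ia(3) sia by simp
      have yAdj: "Adj A k v y" using yeq xs vV ia(1) t_props(2) by (intro AdjI1[of _ _ _ "Suc i"]) auto
      have yV: "y \<in> V A k" using Adj_V(1)[OF yAdj k1] .
      have yF1: "y \<notin> F1 A t A0"
      proof
        assume "y \<in> F1 A t A0"
        then have "t[i := x] = t" unfolding y_def F1_def by auto
        then have "t[i := x] ! i = t ! i" by simp
        then show False using xti ia(1) by simp
      qed
      have yF2: "y \<notin> F2 t A0"
      proof
        assume "y \<in> F2 t A0"
        then obtain j b where "j < length t" "y = t ! j # t[j := b]" unfolding F2_def by auto
        then have "a = t ! j" unfolding y_def by simp
        then show False using aA \<open>j < length t\<close> nth_mem by fastforce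
      qed
      have yN: "y \<in> ?N" using yV yF1 yF2 yAdj unfolding SS_def by blast
      have ynot: "y \<notin> Cw - {z}"
      proof
        assume "y \<in> Cw - {z}"
        then obtain b where "y = b # s" unfolding Cw_def by blast
        then have "t[i := x] = s" unfolding y_def by simp
        then have "x = s ! i" using ia(1) by (metis nth_list_update_eq)
        then show False using xs'(1) ia(1) up(3) xs'(2) nth_mem by (metis length_list_update ia(3))
      qed
      have "insert y (Cw - {z}) \<subseteq> ?N" using sub1 yN by blast
      then have "card (insert y (Cw - {z})) \<le> card ?N" using finN by (rule card_mono[rotated])
      moreover have "card (insert y (Cw - {z})) = Suc (card (Cw - {z}))"
        using ynot finite_subset[OF sub1 finN] by simp
      moreover have "card Cw - 1 \<le> card (Cw - {z})" by (simp add: card_Diff_singleton_if)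
      ultimately show ?thesis using cCw hle by linarith
    qed
  qed
qed

lemma SS_hcut: "h_cut (V A k) (Adj A k) h (SS A t A0)"
  unfolding h_cut_def
proof (intro conjI)
  show "SS A t A0 \<subseteq> V A k" by (rule SS_V)
  show "min_degree_ge (V A k - SS A t A0) (Adj A k) h" by (rule mindeg_SS)
  obtain a where a: "a \<in> A0" using cA0 by (metis card.empty ex_in_conv nat.distinct(1))
  have aK: "a # t \<in> KK t A0" using a unfolding KK_def by blast
  have aW: "a # t \<in> V A k - SS A t A0" using aK KK_V KK_notS by blast
  obtain w where w: "w \<in> V A k - SS A t A0" "w \<notin> KK t A0" using exists_far by blast
  have "\<not> RR (V A k - SS A t A0) A k (a # t) w" using R_K aK w(2) by blast
  then show "disconnected_on (V A k - SS A t A0) (Adj A k)"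
    unfolding disconnected_on_def using aW w(1) by blast
qed

end




lemma upper:
  assumes finA: "finite A" and k2: "2 \<le> k" and kn: "k < card A" and hle: "h \<le> card A - k"
  shows "\<exists>S. h_cut (V A k) (Adj A k) h S \<and> card S \<le> card A - 1 + h * (k - 2)"
proof -
  have "card (V A (k - 1)) = \<Prod>{card A - (k - 1) + 1..card A}" using card_V[OF finA] kn by simp
  also have "\<dots> > 0" by (intro prod_pos) auto
  finally obtain t where tV: "t \<in> V A (k - 1)" by (metis card.empty ex_in_conv less_irrefl)
  have tp: "distinct t" "length t = k - 1" "set t \<subseteq> A" using tV unfolding V_def by auto
  have "card (A - set t) = card A - (k - 1)" using tp finA by (simp add: card_Diff_subset distinct_card)
  then have "Suc h \<le> card (A - set t)" using hle kn k2 by simp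
  then obtain A0 where A0: "A0 \<subseteq> A - set t" "card A0 = Suc h" by (metis obtain_subset_with_card_n)
  show ?thesis using SS_hcut[OF finA k2 kn hle tV A0] card_SS[OF finA k2 kn hle tV A0] by blast
qed

theorem theorem3p4:
  fixes n k h :: nat
  assumes "2 \<le> k" and "k \<le> n - 1" and "h \<le> n - k"
  shows "h_super_connectivity (star_verts n k) (star_adj n k) h = n + h * (k - 2) - 1"
proof -
  have sv: "star_verts n k = V {1..n} k" unfolding star_verts_def V_def by simp
  have sa: "star_adj n k = Adj {1..n} k" unfolding star_adj_def Adj_def V_def star_verts_def by (intro ext) simp
  have cn: "card {1..n} = n" by simp
  have kn: "k < card {1..n}" using assms by simp
  have hle: "h \<le> card {1..n} - k" using assms by simp
  define M where "M = {card S | S. h_cut (V {1..n} k) (Adj {1..n} k) h S}"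
  have eq: "n + h * (k - 2) - 1 = card {1..n} - 1 + h * (k - 2)" using assms by simp
  obtain S0 where S0: "h_cut (V {1..n} k) (Adj {1..n} k) h S0" "card S0 \<le> card {1..n} - 1 + h * (k - 2)"
    using upper[OF finite_atLeastAtMost assms(1) kn hle] by blast
  have Mne: "M \<noteq> {}" using S0(1) unfolding M_def by blast
  have lb: "card {1..n} - 1 + h * (k - 2) \<le> m" if mM: "m \<in> M" for m
  proof -
    obtain S where S: "m = card S" "h_cut (V {1..n} k) (Adj {1..n} k) h S" using mM unfolding M_def by blast
    show ?thesis unfolding S(1)
      by (rule T_lemma[OF finite_atLeastAtMost _ kn hle]) (use S(2) assms(1) in \<open>auto simp: h_cut_def\<close>)
  qed
  have "Inf M \<in> M" by (rule Inf_nat_def1[OF Mne])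
  then have "card {1..n} - 1 + h * (k - 2) \<le> Inf M" by (rule lb)
  moreover have "Inf M \<le> card S0" using S0(1) unfolding M_def by (intro cInf_lower) (auto simp: bdd_below_def)
  ultimately have "Inf M = card {1..n} - 1 + h * (k - 2)" using S0(2) by linarith
  then show ?thesis unfolding h_super_connectivity_def sv sa M_def[symmetric] eq .
qed



end
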